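(* Let $\mathfrak g$ be a finite-dimensional nilpotent Lie algebra over a field $k$ of characteristic zero, and let $x\cdot y$ be an LR-structure on $\mathfrak g$. Then there exists a complete LR-structure $x\circ y$ on $\mathfrak g$ such that $\mathfrak g\circ\mathfrak g\subseteq \mathfrak g\cdot\mathfrak g$, where $\mathfrak g\circ\mathfrak g$ and $\mathfrak g\cdot\mathfrak g$ denote the linear spans of all products $x\circ y$, respectively $x\cdot y$, with $x,y\in\mathfrak g$.
   Context: An LR-algebra is a vector space $A$ with a bilinear product $\cdot$ satisfying $x\cdot(y\cdot z)=y\cdot(x\cdot z)$ and $(x\cdot y)\cdot z=(x\cdot z)\cdot y$ for all $x,y,z\in A$. An LR-structure on a Lie algebra $\mathfrak g$ is an LR-algebra product on the underlying vector space of $\mathfrak g$ such that $x\cdot y-y\cdot x=[x,y]$ for all $x,y$. An LR-structure is complete if all right multiplications $R(x)\colon y\mapsto y\cdot x$ are nilpotent. *)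

theory Defs
  imports Complex_Main
begin

text \<open>A vector space V over a field k is modelled by a carrier type 'v with
  scalar multiplication scale :: 'k \<Rightarrow> 'v \<Rightarrow> 'v satisfying the locale vector_space.\<close>

definition bilinear_op :: "('k::field \<Rightarrow> 'v::ab_group_add \<Rightarrow> 'v) \<Rightarrow> ('v \<Rightarrow> 'v \<Rightarrow> 'v) \<Rightarrow> bool" where
  "bilinear_op scale f \<longleftrightarrow>
     (\<forall>x. module_hom scale scale (\<lambda>y. f x y)) \<and> (\<forall>y. module_hom scale scale (\<lambda>x. f x y))"

definition finite_dim :: "('k::field \<Rightarrow> 'v::ab_group_add \<Rightarrow> 'v) \<Rightarrow> bool" where
  "finite_dim scale \<longleftrightarrow> (\<exists>B. finite B \<and> module.span scale B = UNIV)"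

definition lie_algebra :: "('k::field \<Rightarrow> 'v::ab_group_add \<Rightarrow> 'v) \<Rightarrow> ('v \<Rightarrow> 'v \<Rightarrow> 'v) \<Rightarrow> bool" where
  "lie_algebra scale br \<longleftrightarrow> vector_space scale \<and> bilinear_op scale br \<and>
     (\<forall>x. br x x = 0) \<and>
     (\<forall>x y z. br x (br y z) + br y (br z x) + br z (br x y) = 0)"

fun lower_central :: "('k::field \<Rightarrow> 'v::ab_group_add \<Rightarrow> 'v) \<Rightarrow> ('v \<Rightarrow> 'v \<Rightarrow> 'v) \<Rightarrow> nat \<Rightarrow> 'v set" where
  "lower_central scale br 0 = UNIV"
| "lower_central scale br (Suc i) =
     module.span scale {br x y | x y. y \<in> lower_central scale br i}"

definition nilpotent_lie :: "('k::field \<Rightarrow> 'v::ab_group_add \<Rightarrow> 'v) \<Rightarrow> ('v \<Rightarrow> 'v \<Rightarrow> 'v) \<Rightarrow> bool" where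
  "nilpotent_lie scale br \<longleftrightarrow> (\<exists>n. lower_central scale br n = {0})"

definition LR_algebra :: "('k::field \<Rightarrow> 'v::ab_group_add \<Rightarrow> 'v) \<Rightarrow> ('v \<Rightarrow> 'v \<Rightarrow> 'v) \<Rightarrow> bool" where
  "LR_algebra scale p \<longleftrightarrow> bilinear_op scale p \<and>
     (\<forall>x y z. p x (p y z) = p y (p x z)) \<and>
     (\<forall>x y z. p (p x y) z = p (p x z) y)"

definition LR_structure :: "('k::field \<Rightarrow> 'v::ab_group_add \<Rightarrow> 'v) \<Rightarrow> ('v \<Rightarrow> 'v \<Rightarrow> 'v) \<Rightarrow> ('v \<Rightarrow> 'v \<Rightarrow> 'v) \<Rightarrow> bool" where
  "LR_structure scale br p \<longleftrightarrow> LR_algebra scale p \<and> (\<forall>x y. p x y - p y x = br x y)"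

definition complete_LR :: "('v::ab_group_add \<Rightarrow> 'v \<Rightarrow> 'v) \<Rightarrow> bool" where
  "complete_LR p \<longleftrightarrow> (\<forall>x. \<exists>n. ((\<lambda>y. p y x) ^^ n) = (\<lambda>_. 0))"

definition product_span :: "('k::field \<Rightarrow> 'v::ab_group_add \<Rightarrow> 'v) \<Rightarrow> ('v \<Rightarrow> 'v \<Rightarrow> 'v) \<Rightarrow> 'v set" where
  "product_span scale p = module.span scale {p x y | x y. True}"

end

theory Submission
  imports Defs
begin


lemma funpow_add_fun:
  fixes f :: "'a::ab_group_add \<Rightarrow> 'a"
  assumes "\<And>x y. f (x + y) = f x + f y"
  shows "(f^^n) (x + y) = (f^^n) x + (f^^n) y"
  by (induction n) (auto simp: assms)

lemma funpow_zero_fun: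
  fixes f :: "'a::ab_group_add \<Rightarrow> 'a"
  assumes "f 0 = (0::'a::ab_group_add)"
  shows "(f^^n) 0 = 0"
  by (induction n) (auto simp: assms)

lemma funpow_comm:
  assumes "\<And>x. f (g x) = g (f x)"
  shows "f ((g^^n) x) = (g^^n) (f x)"
  by (induction n) (auto simp: assms)

lemma funpow_comm2:
  assumes "\<And>x. f (g x) = g (f x)"
  shows "(f^^m) ((g^^n) x) = (g^^n) ((f^^m) x)"
proof (induction m)
  case 0 show ?case by simp
next
  case (Suc m)
  have "(f ^^ Suc m) ((g ^^ n) x) = f ((f^^m) ((g^^n) x))" by simp
  also have "\<dots> = f ((g^^n) ((f^^m) x))" using Suc by simp
  also have "\<dots> = (g^^n) (f ((f^^m) x))" by (rule funpow_comm[of f g, OF assms])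
  finally show ?case by simp
qed

locale fdvs = finite_dimensional_vector_space scale Basis
  for scale :: "'k::field \<Rightarrow> 'v::ab_group_add \<Rightarrow> 'v" and Basis
begin

definition lin :: "('v \<Rightarrow> 'v) \<Rightarrow> bool" where
  "lin T \<longleftrightarrow> (\<forall>x y. T (x + y) = T x + T y) \<and> (\<forall>c x. T (scale c x) = scale c (T x))"

lemma lin_zero: "lin T \<Longrightarrow> T 0 = 0"
proof -
  assume "lin T"
  then have "T (0 + 0) = T 0 + T 0" unfolding lin_def by blast
  then show "T 0 = 0" by simp
qed

lemma lin_diff: "lin T \<Longrightarrow> T (x - y) = T x - T y"
proof -
  assume "lin T"
  then have "T ((x - y) + y) = T (x - y) + T y" unfolding lin_def by blast
  then show ?thesis by (simp add: eq_diff_eq)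
qed

lemma lin_pow: "lin T \<Longrightarrow> lin (T^^k)"
  by (induction k) (auto simp: lin_def)

lemma subspace_range: "lin T \<Longrightarrow> subspace (range T)"
  unfolding subspace_def
proof (intro conjI ballI allI)
  assume T: "lin T"
  have "T 0 = 0" using lin_zero[OF T] .
  then show "0 \<in> range T" by (metis rangeI)
  fix x y assume "x \<in> range T" "y \<in> range T"
  then obtain a b where "x = T a" "y = T b" by auto
  then have "x + y = T (a + b)" using T unfolding lin_def by simp
  then show "x + y \<in> range T" by simp
next
  fix c x assume T: "lin T" and "x \<in> range T"
  then obtain a where "x = T a" by auto
  then have "scale c x = T (scale c a)" using T unfolding lin_def by simp
  then show "scale c x \<in> range T" by simp
qed

lemma subspace_ker: "lin T \<Longrightarrow> subspace {x. T x = 0}"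
  unfolding subspace_def using lin_zero[of T] unfolding lin_def
  by simp

lemma stab_dec:
  assumes "\<And>k. subspace (S k)" "\<And>k. S (Suc k) \<subseteq> S k"
  shows "\<exists>n. \<forall>m\<ge>n. S m = S n"
proof -
  obtain n where n: "\<forall>y. dim (S n) \<le> dim (S y)"
    using ex_has_least_nat[of "\<lambda>_. True" 0 "\<lambda>k. dim (S k)"] by auto
  have "S m = S n" if "m \<ge> n" for m
  proof -
    have a: "S m \<subseteq> S n" using lift_Suc_antimono_le[of S, OF assms(2) that] .
    have b: "dim (S n) \<le> dim (S m)" using n by blast
    show ?thesis using subspace_dim_equal[OF assms(1)[of m] assms(1)[of n] a b] .
  qed
  then show ?thesis by blast
qed

lemma stab_inc:
  assumes "\<And>k. subspace (S k)" "\<And>k. S k \<subseteq> S (Suc k)"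
  shows "\<exists>n. \<forall>m\<ge>n. S m = S n"
proof -
  obtain n where n: "\<forall>y. dimension - dim (S n) \<le> dimension - dim (S y)"
    using ex_has_least_nat[of "\<lambda>_. True" 0 "\<lambda>k. dimension - dim (S k)"] by auto
  have "S m = S n" if "m \<ge> n" for m
  proof -
    have a: "S n \<subseteq> S m" using lift_Suc_mono_le[of S, OF assms(2) that] .
    have b: "dim (S m) \<le> dim (S n)"
      using n[rule_format, of m] dim_subset_UNIV[of "S m"] dim_subset_UNIV[of "S n"] by linarith
    have "S n = S m" using subspace_dim_equal[OF assms(1)[of n] assms(1)[of m] a b] .
    then show ?thesis by simp
  qed
  then show ?thesis by blast
qed

lemma fitting:
  assumes T: "lin T"
  shows "\<exists>n. \<forall>m\<ge>n. range (T^^m) = range (T^^n) \<and> {x. (T^^m) x = 0} = {x. (T^^n) x = 0}"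
proof -
  have r1: "subspace (range (T^^k))" for k using subspace_range[OF lin_pow[OF T]] .
  have r2: "range (T ^^ Suc k) \<subseteq> range (T ^^ k)" for k
  proof
    fix y assume "y \<in> range (T ^^ Suc k)"
    then obtain x where "y = (T ^^ Suc k) x" by blast
    then have "y = (T^^k) (T x)" by (simp only: funpow_Suc_right o_apply)
    then show "y \<in> range (T^^k)" by blast
  qed
  obtain n1 where n1: "\<forall>m\<ge>n1. range (T^^m) = range (T^^n1)"
    using stab_dec[of "\<lambda>k. range (T^^k)", OF r1 r2] by blast
  have k1: "subspace {x. (T^^k) x = 0}" for k using subspace_ker[OF lin_pow[OF T]] .
  have k2: "{x. (T ^^ k) x = 0} \<subseteq> {x. (T ^^ Suc k) x = 0}" for k
  proof
    fix x assume "x \<in> {x. (T ^^ k) x = 0}"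
    then have "(T ^^ Suc k) x = T 0" by simp
    then show "x \<in> {x. (T ^^ Suc k) x = 0}" using lin_zero[OF T] by simp
  qed
  obtain n2 where n2: "\<forall>m\<ge>n2. {x. (T^^m) x = 0} = {x. (T^^n2) x = 0}"
    using stab_inc[of "\<lambda>k. {x. (T^^k) x = 0}", OF k1 k2] by blast
  show ?thesis
  proof (rule exI[of _ "max n1 n2"], intro allI impI)
    fix m assume m: "max n1 n2 \<le> m"
    have e1: "range (T^^m) = range (T^^n1)" using n1 m by (intro n1[rule_format]) simp
    have e2: "range (T^^(max n1 n2)) = range (T^^n1)" by (intro n1[rule_format]) simp
    have e3: "{x. (T^^m) x = 0} = {x. (T^^n2) x = 0}" using m by (intro n2[rule_format]) simp
    have e4: "{x. (T^^(max n1 n2)) x = 0} = {x. (T^^n2) x = 0}" by (intro n2[rule_format]) simp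
    show "range (T^^m) = range (T^^(max n1 n2)) \<and> {x. (T^^m) x = 0} = {x. (T^^(max n1 n2)) x = 0}"
      using e1 e2 e3 e4 by (intro conjI; simp only:)
  qed
qed

end


locale LRS = fdvs scale Basis for scale :: "'k::field \<Rightarrow> 'v::ab_group_add \<Rightarrow> 'v" and Basis +
  fixes dot :: "'v \<Rightarrow> 'v \<Rightarrow> 'v"
  assumes addL: "dot (x + x') y = dot x y + dot x' y"
  and addR: "dot x (y + y') = dot x y + dot x y'"
  and scL: "dot (scale c x) y = scale c (dot x y)"
  and scR: "dot x (scale c y) = scale c (dot x y)"
  and lcomm: "dot x (dot y z) = dot y (dot x z)"
  and rcomm: "dot (dot x y) z = dot (dot x z) y"
  and adnil: "\<exists>K. \<forall>v z. ((\<lambda>y. dot y v - dot v y)^^K) z = 0"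
begin

lemma linR: "lin (\<lambda>y. dot y w)"
  unfolding lin_def by (intro conjI allI addL scL)

lemma linL: "lin (\<lambda>y. dot x y)"
  unfolding lin_def by (intro conjI allI addR scR)

lemma dot0L[simp]: "dot 0 y = 0" using lin_zero[OF linR] by simp
lemma dot0R[simp]: "dot x 0 = 0" using lin_zero[OF linL] by simp
lemma diffL: "dot (x - x') y = dot x y - dot x' y" using lin_diff[OF linR] by simp
lemma diffR: "dot x (y - y') = dot x y - dot x y'" using lin_diff[OF linL] by simp

lemma comm_AA: "dot (dot x y) (dot z w) = dot (dot z w) (dot x y)"
proof -
  have "dot (dot x y) (dot z w) = dot (dot x (dot z w)) y" by (rule rcomm)
  also have "\<dots> = dot (dot z (dot x w)) y" by (simp only: lcomm[of x z w])
  also have "\<dots> = dot (dot z y) (dot x w)" by (rule rcomm)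
  also have "\<dots> = dot x (dot (dot z y) w)" by (rule lcomm)
  also have "\<dots> = dot x (dot (dot z w) y)" by (simp only: rcomm[of z y w])
  also have "\<dots> = dot (dot z w) (dot x y)" by (rule lcomm)
  finally show ?thesis .
qed

end



context LRS begin

lemma step:
  "\<exists>circ. LRS scale Basis circ \<and> (\<forall>x y. \<exists>a. circ x y = dot x a) \<and>
     (\<forall>x y. circ x y - circ y x = dot x y - dot y x) \<and>
     (\<exists>n. ((\<lambda>y. circ y u)^^n) = (\<lambda>_. 0)) \<and>
     (\<forall>w. (\<exists>n. ((\<lambda>y. dot y w)^^n) = (\<lambda>_. 0)) \<longrightarrow> (\<exists>n. ((\<lambda>y. circ y w)^^n) = (\<lambda>_. 0)))"
proof -
  define T where "T = (\<lambda>y. dot y u)"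
  have linT: "lin T" unfolding T_def by (rule linR)
  obtain n0 where n0: "\<forall>m\<ge>n0. range (T^^m) = range (T^^n0) \<and> {x. (T^^m) x = 0} = {x. (T^^n0) x = 0}"
    using fitting[OF linT] by blast
  define N where "N = Suc n0"
  define V1 where "V1 = range (T^^N)"
  define V0 where "V0 = {x. (T^^N) x = 0}"
  have linTN: "lin (T^^N)" by (rule lin_pow[OF linT])
  have sV1: "subspace V1" unfolding V1_def by (rule subspace_range[OF linTN])
  have sV0: "subspace V0" unfolding V0_def by (rule subspace_ker[OF linTN])
  have hN: "range (T^^N) = range (T^^n0) \<and> {x. (T^^N) x = 0} = {x. (T^^n0) x = 0}"
    using n0[rule_format, of N] unfolding N_def by simp
  have hNN: "range (T^^(N+N)) = range (T^^n0) \<and> {x. (T^^(N+N)) x = 0} = {x. (T^^n0) x = 0}"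
    using n0[rule_format, of "N+N"] unfolding N_def by simp
  have V1n0: "range (T^^n0) = V1" unfolding V1_def using hN by simp
  have V1NN: "range (T^^(N+N)) = V1" using hNN V1n0 by simp
  have V0NN: "{x. (T^^(N+N)) x = 0} = V0" unfolding V0_def using hNN hN by simp
  have dec: "\<exists>a. a \<in> V1 \<and> v - a \<in> V0" for v
  proof -
    have "(T^^N) v \<in> range (T^^(N+N))" using V1NN unfolding V1_def by simp
    then obtain w where w: "(T^^N) v = (T^^(N+N)) w" by blast
    have w2: "(T^^(N+N)) w = (T^^N) ((T^^N) w)" by (simp add: funpow_add)
    have "(T^^N) (v - (T^^N) w) = (T^^N) v - (T^^N) ((T^^N) w)" by (rule lin_diff[OF linTN])
    also have "\<dots> = 0" using w w2 by simp
    finally have "v - (T^^N) w \<in> V0" unfolding V0_def by simp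
    moreover have "(T^^N) w \<in> V1" unfolding V1_def by simp
    ultimately show ?thesis by blast
  qed
  have uniq: "x = 0" if hx: "x \<in> V0" "x \<in> V1" for x
  proof -
    obtain y where y: "x = (T^^N) y" using hx(2) unfolding V1_def by blast
    have "(T^^(N+N)) y = (T^^N) x" using y by (simp add: funpow_add)
    also have "\<dots> = 0" using hx(1) unfolding V0_def by simp
    finally have "y \<in> V0" using V0NN by blast
    then show "x = 0" using y unfolding V0_def by simp
  qed
  define E where "E = (\<lambda>v. SOME a. a \<in> V1 \<and> v - a \<in> V0)"
  have E1: "E v \<in> V1" and E0: "v - E v \<in> V0" for v
    using someI_ex[OF dec[of v]] unfolding E_def by auto
  have Euniq: "E v = a" if "a \<in> V1" "v - a \<in> V0" for v a
  proof -
    have "E v - a \<in> V1" using subspace_diff[OF sV1 E1 that(1)] .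
    moreover have eq: "E v - a = (v - a) - (v - E v)" by (simp add: algebra_simps)
    have "E v - a \<in> V0" unfolding eq by (rule subspace_diff[OF sV0 that(2) E0[of v]])
    ultimately show ?thesis using uniq by force
  qed
  have Eadd: "E (x + y) = E x + E y" for x y
  proof (rule Euniq)
    show "E x + E y \<in> V1" by (rule subspace_add[OF sV1 E1 E1])
    have eq: "x + y - (E x + E y) = (x - E x) + (y - E y)" by (simp add: algebra_simps)
    show "x + y - (E x + E y) \<in> V0" unfolding eq by (rule subspace_add[OF sV0 E0[of x] E0[of y]])
  qed
  have Escale: "E (scale c x) = scale c (E x)" for c x
  proof (rule Euniq)
    show "scale c (E x) \<in> V1" by (rule subspace_scale[OF sV1 E1])
    have eq: "scale c x - scale c (E x) = scale c (x - E x)" by (simp add: scale_right_diff_distrib)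
    show "scale c x - scale c (E x) \<in> V0" unfolding eq by (rule subspace_scale[OF sV0 E0[of x]])
  qed
  have comm_inv: "S a \<in> V1 \<and> (x \<in> V0 \<longrightarrow> S x \<in> V0) \<and> E (S v) = S (E v)"
    if S: "lin S" "\<And>y. S (T y) = T (S y)" and a: "a \<in> V1" for S a x v
  proof (intro conjI impI)
    have SN: "S ((T^^N) y) = (T^^N) (S y)" for y by (rule funpow_comm[of S T, OF S(2)])
    have V1S: "S b \<in> V1" if "b \<in> V1" for b
    proof -
      obtain y where "b = (T^^N) y" using \<open>b \<in> V1\<close> unfolding V1_def by blast
      then have "S b = (T^^N) (S y)" using SN by simp
      then show ?thesis unfolding V1_def by simp
    qed
    have V0S: "S b \<in> V0" if "b \<in> V0" for b
    proof -
      have "(T^^N) (S b) = S ((T^^N) b)" using SN by simp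
      also have "\<dots> = S 0" using that unfolding V0_def by simp
      also have "\<dots> = 0" by (rule lin_zero[OF S(1)])
      finally show ?thesis unfolding V0_def by simp
    qed
    show "S a \<in> V1" using V1S a .
    show "S x \<in> V0" if "x \<in> V0" using V0S that .
    show "E (S v) = S (E v)"
    proof (rule Euniq)
      show "S (E v) \<in> V1" using V1S E1 .
      have eq: "S v - S (E v) = S (v - E v)" using lin_diff[OF S(1)] by simp
      show "S v - S (E v) \<in> V0" unfolding eq by (rule V0S[OF E0[of v]])
    qed
  qed
  have RT: "(\<lambda>y. dot y w) (T y) = T ((\<lambda>y. dot y w) y)" for w y
    unfolding T_def by (simp add: rcomm[of y u w])
  have RV1: "dot a w \<in> V1" if "a \<in> V1" for a w
    using comm_inv[of "\<lambda>y. dot y w" a 0 0, OF linR RT that] by simp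
  have RV0: "dot x w \<in> V0" if "x \<in> V0" for x w
    using comm_inv[of "\<lambda>y. dot y w" "E 0" x 0, OF linR RT E1[of 0]] that by simp
  have ER: "E (dot v w) = dot (E v) w" for v w
    using comm_inv[of "\<lambda>y. dot y w" "E 0" 0 v, OF linR RT E1[of 0]] by simp
  have V1T: "\<exists>b. a = dot ((T^^n0) b) u" if ha: "a \<in> V1" for a
  proof -
    obtain y where "a = (T^^N) y" using ha unfolding V1_def by blast
    then have "a = T ((T^^n0) y)" unfolding N_def by simp
    then show ?thesis unfolding T_def by blast
  qed
  have LV1: "dot z a \<in> V1" if ha: "a \<in> V1" for z a
  proof -
    obtain b where b: "a = dot ((T^^n0) b) u" using V1T[OF ha] by blast
    have "dot z a = dot ((T^^n0) b) (dot z u)" using b lcomm by simp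
    also have "\<dots> = (T^^n0) (dot b (dot z u))"
      using funpow_comm[of "\<lambda>y. dot y (dot z u)" T, OF RT] by simp
    finally show ?thesis using V1n0 by (metis rangeI)
  qed
  have Z: "dot x a = 0" if "x \<in> V0" "a \<in> V1" for x a
    using uniq RV0[OF that(1)] LV1[OF that(2)] by blast
  have C1: "dot a b = dot b a" if hab: "a \<in> V1" "b \<in> V1" for a b
  proof -
    obtain a' where a': "a = dot ((T^^n0) a') u" using V1T[OF hab(1)] by blast
    obtain b' where b': "b = dot ((T^^n0) b') u" using V1T[OF hab(2)] by blast
    show ?thesis unfolding a' b' by (rule comm_AA)
  qed
  obtain K where K: "\<forall>v z. ((\<lambda>y. dot y v - dot v y)^^K) z = 0" using adnil by blast
  have RnilV1: "((\<lambda>y. dot y v)^^K) a = 0" if v: "v \<in> V0" and a: "a \<in> V1" for v a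
  proof -
    have "((\<lambda>y. dot y v)^^k) a = ((\<lambda>y. dot y v - dot v y)^^k) a \<and> ((\<lambda>y. dot y v)^^k) a \<in> V1" for k
    proof (induction k)
      case 0 then show ?case using a by simp
    next
      case (Suc k)
      define b where "b = ((\<lambda>y. dot y v)^^k) a"
      have bV: "b \<in> V1" and beq: "((\<lambda>y. dot y v - dot v y)^^k) a = b" using Suc b_def by auto
      have "dot v b = 0" using Z[OF v bV] .
      then show ?case using bV beq RV1[OF bV] unfolding b_def by simp
    qed
    then show ?thesis using K by simp
  qed
  define P where "P = (\<lambda>y. y - E y)"
  have P0: "P y \<in> V0" for y unfolding P_def using E0 .
  have PE: "P y + E y = y" for y unfolding P_def by simp
  have PR: "P (dot y w) = dot (P y) w" for y w unfolding P_def using ER diffL by simp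
  have Padd: "P (x + y) = P x + P y" for x y unfolding P_def using Eadd by (simp add: algebra_simps)
  have Pscale: "P (scale c x) = scale c (P x)" for c x
    unfolding P_def using Escale by (simp add: scale_right_diff_distrib)
  define circ where "circ = (\<lambda>x y. dot x (P y))"
  have key: "((\<lambda>y. circ y w)^^(A + K)) = (\<lambda>_. 0)" if hA: "\<forall>x\<in>V0. ((\<lambda>y. dot y w)^^A) x = 0" for w A
  proof -
    define Q where "Q = (\<lambda>y. dot y (P w))"
    have Qc: "(\<lambda>y. circ y w) = Q" unfolding Q_def circ_def by simp
    have linQ: "lin Q" unfolding Q_def by (rule linR)
    have QV0: "(Q^^k) x = ((\<lambda>y. dot y w)^^k) x \<and> (Q^^k) x \<in> V0" if "x \<in> V0" for k x
    proof (induction k)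
      case 0 then show ?case using that by simp
    next
      case (Suc k)
      define b where "b = (Q^^k) x"
      have bV: "b \<in> V0" and beq: "((\<lambda>y. dot y w)^^k) x = b" using Suc b_def by auto
      have "Q b = dot b w - dot b (E w)" unfolding Q_def P_def by (rule diffR)
      also have "\<dots> = dot b w" using Z[OF bV E1] by simp
      finally have Qb: "Q b = dot b w" .
      show ?case using Qb beq RV0[OF bV] unfolding b_def by simp
    qed
    have Q0: "(Q^^k) 0 = 0" for k by (rule funpow_zero_fun[of Q, OF lin_zero[OF linQ]])
    have "(Q^^(A+K)) v = 0" for v
    proof -
      have addQ: "\<And>x y. Q (x + y) = Q x + Q y" using linQ unfolding lin_def by blast
      have "(Q^^(A+K)) v = (Q^^(A+K)) (P v) + (Q^^(A+K)) (E v)"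
        using funpow_add_fun[of Q "A+K" "P v" "E v", OF addQ] PE by simp
      moreover have "(Q^^(A+K)) (P v) = 0"
      proof -
        have "(Q^^(A+K)) (P v) = (Q^^K) ((Q^^A) (P v))" by (simp add: funpow_add add.commute[of A K])
        also have "(Q^^A) (P v) = 0" using QV0[OF P0, of A] hA P0 by simp
        finally show ?thesis using Q0 by simp
      qed
      moreover have "(Q^^(A+K)) (E v) = 0"
      proof -
        have "(Q^^(A+K)) (E v) = (Q^^A) ((Q^^K) (E v))" by (simp add: funpow_add)
        also have "(Q^^K) (E v) = 0" unfolding Q_def by (rule RnilV1[OF P0 E1])
        finally show ?thesis using Q0 by simp
      qed
      ultimately show ?thesis by simp
    qed
    then show ?thesis using Qc by auto
  qed
  have circ_dot: "circ x y - circ y x = dot x y - dot y x" for x y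
  proof -
    have a: "dot x (E y) = dot (E x) (E y)"
    proof -
      have "dot x (E y) = dot (P x) (E y) + dot (E x) (E y)" using addL[of "P x" "E x" "E y"] PE by simp
      then show ?thesis using Z[OF P0 E1] by simp
    qed
    have b: "dot y (E x) = dot (E y) (E x)"
    proof -
      have "dot y (E x) = dot (P y) (E x) + dot (E y) (E x)" using addL[of "P y" "E y" "E x"] PE by simp
      then show ?thesis using Z[OF P0 E1] by simp
    qed
    have c: "dot (E x) (E y) = dot (E y) (E x)" by (rule C1[OF E1 E1])
    have "circ x y - circ y x = (dot x y - dot x (E y)) - (dot y x - dot y (E x))"
      unfolding circ_def P_def using diffR by simp
    then show ?thesis using a b c by simp
  qed
  have H: "dot x (dot (P y) (P z)) = dot (P y) (dot (P x) (P z))" for x y z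
  proof -
    have "dot x (dot (P y) (P z)) = dot (P y) (dot x (P z))" by (rule lcomm)
    also have "dot x (P z) = dot (P x) (P z) + dot (E x) (P z)" using addL[of "P x" "E x" "P z"] PE by simp
    also have "dot (P y) (dot (P x) (P z) + dot (E x) (P z)) = dot (P y) (dot (P x) (P z))"
      using addR Z[OF P0 RV1[OF E1]] by simp
    finally show ?thesis .
  qed
  have LRc: "LRS scale Basis circ"
  proof unfold_locales
    show "circ (x + x') y = circ x y + circ x' y" for x x' y unfolding circ_def by (rule addL)
    show "circ x (y + y') = circ x y + circ x y'" for x y y' unfolding circ_def using Padd addR by simp
    show "circ (scale c x) y = scale c (circ x y)" for c x y unfolding circ_def by (rule scL)
    show "circ x (scale c y) = scale c (circ x y)" for c x y unfolding circ_def using Pscale scR by simp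
    show "circ x (circ y z) = circ y (circ x z)" for x y z
    proof -
      have "circ x (circ y z) = dot (P y) (dot (P x) (P z))" unfolding circ_def using PR H by simp
      moreover have "circ y (circ x z) = dot (P x) (dot (P y) (P z))" unfolding circ_def using PR H by simp
      ultimately show ?thesis using lcomm by simp
    qed
    show "circ (circ x y) z = circ (circ x z) y" for x y z unfolding circ_def by (rule rcomm)
    show "\<exists>K. \<forall>v z. ((\<lambda>y. circ y v - circ v y)^^K) z = 0"
      apply (simp only: circ_dot) using K by blast
  qed
  show ?thesis
  proof (intro exI[of _ circ] conjI allI impI)
    show "LRS scale Basis circ" by (rule LRc)
    show "\<exists>a. circ x y = dot x a" for x y unfolding circ_def by blast
    show "circ x y - circ y x = dot x y - dot y x" for x y by (rule circ_dot)
    have "\<forall>x\<in>V0. ((\<lambda>y. dot y u)^^N) x = 0" unfolding V0_def T_def by simp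
    then show "\<exists>n. ((\<lambda>y. circ y u)^^n) = (\<lambda>_. 0)" using key by blast
    show "\<exists>n. ((\<lambda>y. circ y w)^^n) = (\<lambda>_. 0)" if "\<exists>n. ((\<lambda>y. dot y w)^^n) = (\<lambda>_. 0)" for w
    proof -
      obtain A where "((\<lambda>y. dot y w)^^A) = (\<lambda>_. 0)" using \<open>\<exists>n. ((\<lambda>y. dot y w)^^n) = (\<lambda>_. 0)\<close> by blast
      then have "\<forall>x\<in>V0. ((\<lambda>y. dot y w)^^A) x = 0" by simp
      then show ?thesis using key by blast
    qed
  qed
qed

end


context fdvs begin

lemma lin_span:
  assumes lf: "lin f" and img: "\<And>x. x \<in> S \<Longrightarrow> f x \<in> span S'" and x: "x \<in> span S"
  shows "f x \<in> span S'"
proof -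
  have sub: "subspace {x. f x \<in> span S'}"
    unfolding subspace_def
  proof (intro conjI ballI allI)
    show "0 \<in> {x. f x \<in> span S'}" using lin_zero[OF lf] span_zero by simp
    fix x y assume "x \<in> {x. f x \<in> span S'}" "y \<in> {x. f x \<in> span S'}"
    then show "x + y \<in> {x. f x \<in> span S'}" using lf span_add unfolding lin_def by simp
  next
    fix c x assume "x \<in> {x. f x \<in> span S'}"
    then show "scale c x \<in> {x. f x \<in> span S'}" using lf span_scale unfolding lin_def by simp
  qed
  have "span S \<subseteq> {x. f x \<in> span S'}" using span_minimal[OF _ sub] img by blast
  then show ?thesis using x by blast
qed

lemma nil_add:
  assumes lf: "lin f" and lg: "lin g" and cm: "\<And>x. f (g x) = g (f x)"
    and fm: "(f^^m) = (\<lambda>_. 0)" and gn: "(g^^n) = (\<lambda>_. 0)"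
  shows "((\<lambda>v. f v + g v)^^(m+n)) = (\<lambda>_. 0)"
proof -
  define h where "h = (\<lambda>v. f v + g v)"
  define Sk where "Sk = (\<lambda>k v. {(f^^i) ((g^^j) v) | i j. i + j = k})"
  have main: "(h^^k) v \<in> span (Sk k v)" for k v
  proof (induction k)
    case 0
    have "v \<in> Sk 0 v" unfolding Sk_def by force
    then show ?case using span_base by simp
  next
    case (Suc k)
    define x where "x = (h^^k) v"
    have fx: "f x \<in> span (Sk (Suc k) v)"
    proof (rule lin_span[OF lf _ Suc[folded x_def]])
      fix y assume "y \<in> Sk k v"
      then obtain i j where y: "y = (f^^i) ((g^^j) v)" "i + j = k" unfolding Sk_def by blast
      then have "f y = (f^^(Suc i)) ((g^^j) v)" by simp
      moreover have "Suc i + j = Suc k" using y by simp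
      ultimately have "f y \<in> Sk (Suc k) v" unfolding Sk_def by blast
      then show "f y \<in> span (Sk (Suc k) v)" by (rule span_base)
    qed
    have gx: "g x \<in> span (Sk (Suc k) v)"
    proof (rule lin_span[OF lg _ Suc[folded x_def]])
      fix y assume "y \<in> Sk k v"
      then obtain i j where y: "y = (f^^i) ((g^^j) v)" "i + j = k" unfolding Sk_def by blast
      have "g y = (f^^i) (g ((g^^j) v))" unfolding y(1) by (rule funpow_comm[of g f, OF cm[symmetric]])
      then have "g y = (f^^i) ((g^^(Suc j)) v)" by simp
      moreover have "i + Suc j = Suc k" using y by simp
      ultimately have "g y \<in> Sk (Suc k) v" unfolding Sk_def by blast
      then show "g y \<in> span (Sk (Suc k) v)" by (rule span_base)
    qed
    have "(h^^Suc k) v = f x + g x" unfolding x_def h_def by simp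
    then show ?case using span_add[OF fx gx] by simp
  qed
  have f0: "(f^^i) 0 = 0" for i by (rule funpow_zero_fun[of f, OF lin_zero[OF lf]])
  have g0: "(g^^i) 0 = 0" for i by (rule funpow_zero_fun[of g, OF lin_zero[OF lg]])
  have S0: "Sk (m+n) v \<subseteq> {0}" for v
  proof
    fix y assume "y \<in> Sk (m+n) v"
    then obtain i j where y: "y = (f^^i) ((g^^j) v)" "i + j = m + n" unfolding Sk_def by blast
    show "y \<in> {0}"
    proof (cases "m \<le> i")
      case True
      then have "(f^^i) = (f^^(i-m)) \<circ> (f^^m)" by (simp add: funpow_add[symmetric])
      then have "y = (f^^(i-m)) 0" using y(1) fm by simp
      then show ?thesis using f0 by simp
    next
      case False
      then have "n \<le> j" using y(2) by simp
      then have "(g^^j) = (g^^(j-n)) \<circ> (g^^n)" by (simp add: funpow_add[symmetric])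
      then have "(g^^j) v = 0" using gn g0 by simp
      then show ?thesis using y(1) f0 by simp
    qed
  qed
  have "(h^^(m+n)) v = 0" for v
  proof -
    have "(h^^(m+n)) v \<in> span {0}" using main span_mono[OF S0] by blast
    then show ?thesis by simp
  qed
  then show ?thesis unfolding h_def by auto
qed

end

context LRS begin

lemma complete_basis:
  assumes B: "\<forall>b\<in>Basis. \<exists>n. ((\<lambda>y. dot y b)^^n) = (\<lambda>_. 0)"
  shows "\<exists>n. ((\<lambda>y. dot y x)^^n) = (\<lambda>_. 0)"
proof -
  define NL where "NL = {x. \<exists>n. ((\<lambda>y. dot y x)^^n) = (\<lambda>_. 0)}"
  have sub: "subspace NL"
    unfolding subspace_def
  proof (intro conjI ballI allI)
    have "((\<lambda>y. dot y 0)^^1) = (\<lambda>_. 0)" by (rule ext) simp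
    then show "0 \<in> NL" unfolding NL_def by blast
    fix x y assume "x \<in> NL" "y \<in> NL"
    then obtain m n where m: "((\<lambda>z. dot z x)^^m) = (\<lambda>_. 0)" and n: "((\<lambda>z. dot z y)^^n) = (\<lambda>_. 0)"
      unfolding NL_def by blast
    have cm: "(\<lambda>z. dot z x) ((\<lambda>z. dot z y) w) = (\<lambda>z. dot z y) ((\<lambda>z. dot z x) w)" for w
      by (simp add: rcomm[of w y x])
    have "((\<lambda>v. dot v x + dot v y)^^(m+n)) = (\<lambda>_. 0)" by (rule nil_add[OF linR linR cm m n])
    moreover have "(\<lambda>v. dot v x + dot v y) = (\<lambda>v. dot v (x + y))" by (rule ext) (simp add: addR)
    ultimately show "x + y \<in> NL" unfolding NL_def by auto
  next
    fix c x assume "x \<in> NL"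
    then obtain m where m: "((\<lambda>z. dot z x)^^m) = (\<lambda>_. 0)" unfolding NL_def by blast
    have "((\<lambda>z. dot z (scale c x))^^k) w = scale (c^k) (((\<lambda>z. dot z x)^^k) w)" for k w
      by (induction k) (simp_all add: scR scL)
    then have "((\<lambda>z. dot z (scale c x))^^m) = (\<lambda>_. 0)" using m by (intro ext) simp
    then show "scale c x \<in> NL" unfolding NL_def by blast
  qed
  have "Basis \<subseteq> NL" using B unfolding NL_def by blast
  then have "span Basis \<subseteq> NL" using span_minimal sub by blast
  then show ?thesis using span_Basis unfolding NL_def by blast
qed

lemma LRS_self: "LRS scale Basis dot" by unfold_locales

lemma iter:
  assumes "finite F"
  shows "\<exists>circ. LRS scale Basis circ \<and> (\<forall>x y. \<exists>a. circ x y = dot x a) \<and>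
     (\<forall>x y. circ x y - circ y x = dot x y - dot y x) \<and>
     (\<forall>w\<in>F. \<exists>n. ((\<lambda>y. circ y w)^^n) = (\<lambda>_. 0))"
  using assms
proof (induction F rule: finite_induct)
  case empty
  show ?case by (intro exI[of _ dot] conjI LRS_self) auto
next
  case (insert b F)
  then obtain c1 where c1: "LRS scale Basis c1" "\<forall>x y. \<exists>a. c1 x y = dot x a"
    "\<forall>x y. c1 x y - c1 y x = dot x y - dot y x" "\<forall>w\<in>F. \<exists>n. ((\<lambda>y. c1 y w)^^n) = (\<lambda>_. 0)"
    by blast
  obtain c2 where c2: "LRS scale Basis c2" "\<forall>x y. \<exists>a. c2 x y = c1 x a"
    "\<forall>x y. c2 x y - c2 y x = c1 x y - c1 y x" "\<exists>n. ((\<lambda>y. c2 y b)^^n) = (\<lambda>_. 0)"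
    "\<forall>w. (\<exists>n. ((\<lambda>y. c1 y w)^^n) = (\<lambda>_. 0)) \<longrightarrow> (\<exists>n. ((\<lambda>y. c2 y w)^^n) = (\<lambda>_. 0))"
    using LRS.step[OF c1(1), of b] by blast
  show ?case
  proof (intro exI[of _ c2] conjI allI ballI)
    show "LRS scale Basis c2" by (rule c2(1))
    show "\<exists>a. c2 x y = dot x a" for x y using c2(2) c1(2) by metis
    show "c2 x y - c2 y x = dot x y - dot y x" for x y using c2(3) c1(3) by simp
    show "\<exists>n. ((\<lambda>y. c2 y w)^^n) = (\<lambda>_. 0)" if "w \<in> insert b F" for w
      using that c2(4) c2(5) c1(4) by auto
  qed
qed

lemma exists_complete:
  "\<exists>circ. LRS scale Basis circ \<and> (\<forall>x y. \<exists>a. circ x y = dot x a) \<and>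
     (\<forall>x y. circ x y - circ y x = dot x y - dot y x) \<and>
     (\<forall>x. \<exists>n. ((\<lambda>y. circ y x)^^n) = (\<lambda>_. 0))"
proof -
  obtain circ where c: "LRS scale Basis circ" "\<forall>x y. \<exists>a. circ x y = dot x a"
     "\<forall>x y. circ x y - circ y x = dot x y - dot y x"
     "\<forall>w\<in>Basis. \<exists>n. ((\<lambda>y. circ y w)^^n) = (\<lambda>_. 0)"
    using iter[OF finite_Basis] by blast
  have "\<forall>x. \<exists>n. ((\<lambda>y. circ y x)^^n) = (\<lambda>_. 0)"
    using LRS.complete_basis[OF c(1) c(4)] by blast
  then show ?thesis using c by blast
qed

end


theorem mainTheorem4:
  fixes scale :: "'k::field_char_0 \<Rightarrow> 'v::ab_group_add \<Rightarrow> 'v"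
    and br :: "'v \<Rightarrow> 'v \<Rightarrow> 'v"
    and dot :: "'v \<Rightarrow> 'v \<Rightarrow> 'v"
  assumes "lie_algebra scale br"
    and "finite_dim scale"
    and "nilpotent_lie scale br"
    and "LR_structure scale br dot"
  shows "\<exists>circ. LR_structure scale br circ \<and> complete_LR circ \<and>
           product_span scale circ \<subseteq> product_span scale dot"
proof -
  have vs: "vector_space scale" using assms(1) unfolding lie_algebra_def by blast
  interpret vector_space scale by (rule vs)
  obtain B0 where B0: "finite B0" "span B0 = UNIV" using assms(2) unfolding finite_dim_def by blast
  obtain B where B: "independent B" "UNIV \<subseteq> span B"
    using basis_exists[of UNIV] by blast
  have fB: "finite B" using independent_span_bound[OF B0(1) B(1)] B0(2) by blast
  have fd: "fdvs scale B"
    unfolding fdvs_def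
    by unfold_locales (use fB B in auto)
  have LRS: "LR_algebra scale dot" and brdot: "\<And>x y. dot x y - dot y x = br x y"
    using assms(4) unfolding LR_structure_def by blast+
  have bil: "\<forall>x. module_hom scale scale (\<lambda>y. dot x y)" "\<forall>y. module_hom scale scale (\<lambda>x. dot x y)"
    and lc: "\<forall>x y z. dot x (dot y z) = dot y (dot x z)" and rc: "\<forall>x y z. dot (dot x y) z = dot (dot x z) y"
    using LRS unfolding LR_algebra_def bilinear_op_def by blast+
  have addR: "dot x (y + y') = dot x y + dot x y'" for x y y'
    using module_hom.add[OF bil(1)[rule_format, of x]] by simp
  have scR: "dot x (scale c y) = scale c (dot x y)" for x y c
    using module_hom.scale[OF bil(1)[rule_format, of x]] by simp
  have addL: "dot (x + x') y = dot x y + dot x' y" for x x' y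
    using module_hom.add[OF bil(2)[rule_format, of y]] by simp
  have scL: "dot (scale c x) y = scale c (dot x y)" for x y c
    using module_hom.scale[OF bil(2)[rule_format, of y]] by simp
  obtain n where n: "lower_central scale br n = {0}" using assms(3) unfolding nilpotent_lie_def by blast
  have lcs: "((\<lambda>y. dot y v - dot v y)^^k) z \<in> lower_central scale br k" for k v z
  proof (induction k)
    case 0 then show ?case by simp
  next
    case (Suc k)
    define a where "a = ((\<lambda>y. dot y v - dot v y)^^k) z"
    have "br v a \<in> {br x y | x y. y \<in> lower_central scale br k}" using Suc a_def by blast
    then have "br v a \<in> span {br x y | x y. y \<in> lower_central scale br k}" by (rule span_base)
    then have "- br v a \<in> span {br x y | x y. y \<in> lower_central scale br k}" by (rule span_neg)
    moreover have "- br v a = dot a v - dot v a" by (subst brdot[of v a, symmetric]) simp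
    ultimately show ?case unfolding a_def by simp
  qed
  have adnil: "\<exists>K. \<forall>v z. ((\<lambda>y. dot y v - dot v y)^^K) z = 0"
    using lcs[of n] n by blast
  have LRSdot: "LRS scale B dot"
    unfolding LRS_def LRS_axioms_def
    using fd addL addR scL scR lc rc adnil by blast
  obtain circ where c: "LRS scale B circ" "\<forall>x y. \<exists>a. circ x y = dot x a"
     "\<forall>x y. circ x y - circ y x = dot x y - dot y x"
     "\<forall>x. \<exists>n. ((\<lambda>y. circ y x)^^n) = (\<lambda>_. 0)"
    using LRS.exists_complete[OF LRSdot] by blast
  have bilc: "bilinear_op scale circ"
    unfolding bilinear_op_def module_hom_iff_linear Vector_Spaces.linear_iff
    using vs LRS.addL[OF c(1)] LRS.addR[OF c(1)] LRS.scL[OF c(1)] LRS.scR[OF c(1)] by simp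
  have LRc: "LR_structure scale br circ"
    unfolding LR_structure_def LR_algebra_def
    using bilc LRS.lcomm[OF c(1)] LRS.rcomm[OF c(1)] c(3) brdot by simp
  have compc: "complete_LR circ" unfolding complete_LR_def using c(4) .
  have "{circ x y | x y. True} \<subseteq> {dot x y | x y. True}" using c(2) by blast
  then have "product_span scale circ \<subseteq> product_span scale dot"
    unfolding product_span_def by (rule span_mono)
  then show ?thesis using LRc compc by blast
qed

end
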